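(* Let $d\ge2$ and let $Q$ be a qplex. Then the preservation group $\mathcal{G}(Q)$ is a group under matrix multiplication, and it is the symmetry group of $Q$: for every $R\in\mathcal{G}(Q)$ the map $q\mapsto Rq$ is a distance-preserving bijection of $Q$ onto itself, and conversely every distance-preserving bijection $f:Q\to Q$ (with respect to the Euclidean distance) is of the form $f(q)=Rq$ for some $R\in\mathcal{G}(Q)$.
   Context: Fix an integer $d\ge 2$. $\langle\cdot,\cdot\rangle$ is the standard inner product on $\mathbb{R}^{d^2}$, $\|\cdot\|$ the Euclidean norm. $\Delta=\{p\in\mathbb{R}^{d^2}: p(i)\ge0,\ \sum_ip(i)=1\}$; $H=\{u\in\mathbb{R}^{d^2}:\sum_i u(i)=1\}$; $c=(1/d^2,\dots,1/d^2)$. For $A\subseteq H$ the polar is $A^*=\{u\in H:\langle u,v\rangle\ge\frac{1}{d(d+1)}\ \forall v\in A\}$. Out-ball $B_{\rm o}=\{u\in H:\|u-c\|\le r_{\rm o}\}$, $r_{\rm o}^2=\frac{d-1}{d^2(d+1)}$. A qplex is a set $Q\subseteq\Delta\cap B_{\rm o}$ with $Q^*=Q$. A measurement (with $d^2$ outcomes) is an array of reals $r(i|j)\ge0$ with $\sum_i r(i|j)=1$ for every $j$. For $q\in Q$, $q_r(i)=\sum_j\big[(d+1)q(j)-\frac1d\big]r(i|j)$ and $Q_r=\{q_r:q\in Q\}$; the measurement is $Q$-preserving if $Q_r=Q$. Its stretched measurement matrix is $R_{ij}=(d+1)r(i|j)-\frac1d\sum_k r(i|k)$, so that $q_r=Rq$.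 The preservation group $\mathcal{G}(Q)$ is the set of stretched measurement matrices of $Q$-preserving measurements. *)

theory Defs
  imports "HOL-Analysis.Analysis" "HOL-Algebra.Group"
begin

text \<open>Vectors in R^(d^2) are modelled as real^'n with CARD('n) = d^2;
  matrices as real^'n^'n.\<close>

definition prob_simplex :: "(real^'n::finite) set" where
  "prob_simplex = {p. (\<forall>i. p$i \<ge> 0) \<and> (\<Sum>i\<in>UNIV. p$i) = 1}"

definition hyperH :: "(real^'n::finite) set" where
  "hyperH = {u. (\<Sum>i\<in>UNIV. u$i) = 1}"

definition centre :: "nat \<Rightarrow> real^'n::finite" where
  "centre d = (\<chi> i. 1 / (real d)^2)"

definition polar :: "nat \<Rightarrow> (real^'n::finite) set \<Rightarrow> (real^'n) set" where
  "polar d A = {u \<in> hyperH. \<forall>v\<in>A. inner u v \<ge> 1 / (real d * (real d + 1))}"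

definition out_ball :: "nat \<Rightarrow> (real^'n::finite) set" where
  "out_ball d = {u \<in> hyperH. (norm (u - centre d))^2 \<le> (real d - 1) / ((real d)^2 * (real d + 1))}"

definition qplex :: "nat \<Rightarrow> (real^'n::finite) set \<Rightarrow> bool" where
  "qplex d Q \<longleftrightarrow> Q \<subseteq> prob_simplex \<inter> out_ball d \<and> polar d Q = Q"

definition measurement :: "('n::finite \<Rightarrow> 'n \<Rightarrow> real) \<Rightarrow> bool" where
  "measurement r \<longleftrightarrow> (\<forall>i j. r i j \<ge> 0) \<and> (\<forall>j. (\<Sum>i\<in>UNIV. r i j) = 1)"

text \<open>q_r(i) = sum_j [(d+1) q(j) - 1/d] r(i|j); here r i j stands for r(i|j).\<close>
definition meas_apply :: "nat \<Rightarrow> ('n::finite \<Rightarrow> 'n \<Rightarrow> real) \<Rightarrow> real^'n \<Rightarrow> real^'n" where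
  "meas_apply d r q = (\<chi> i. \<Sum>j\<in>UNIV. ((real d + 1) * q$j - 1 / real d) * r i j)"

definition Q_preserving :: "nat \<Rightarrow> (real^'n::finite) set \<Rightarrow> ('n \<Rightarrow> 'n \<Rightarrow> real) \<Rightarrow> bool" where
  "Q_preserving d Q r \<longleftrightarrow> measurement r \<and> meas_apply d r ` Q = Q"

definition stretched :: "nat \<Rightarrow> ('n::finite \<Rightarrow> 'n \<Rightarrow> real) \<Rightarrow> real^'n^'n" where
  "stretched d r = (\<chi> i j. (real d + 1) * r i j - (1 / real d) * (\<Sum>k\<in>UNIV. r i k))"

definition preservation_group :: "nat \<Rightarrow> (real^'n::finite) set \<Rightarrow> (real^'n^'n) set" where
  "preservation_group d Q = {stretched d r | r. Q_preserving d Q r}"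

end

theory Submission
  imports Defs
begin

definition kap :: "nat \<Rightarrow> real" where "kap d = 1 / (real d * (real d + 1))"
definition vv :: "nat \<Rightarrow> 'n::finite \<Rightarrow> real^'n" where
  "vv d j = (\<chi> i. kap d + (if i = j then 1 / (real d + 1) else 0))"
definition aa :: "nat \<Rightarrow> real^'n::finite \<Rightarrow> real^'n" where
  "aa d q = (\<chi> j. (real d + 1) * q$j - 1 / real d)"

lemma k1: "(x::real) > 0 \<Longrightarrow> x^2 * (1/(x*(x+1))) + 1/(x+1) = 1"
proof -
  assume x: "x > 0" then have "x*(x+1) \<noteq> 0" "x + 1 \<noteq> 0" by auto
  then show ?thesis by (simp add: divide_simps power2_eq_square)
qed
lemma k2: "(x::real) > 0 \<Longrightarrow> (x+1)*(1/(x*(x+1)) + 1/(x+1)) - 1/x = 1"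
proof -
  assume x: "x > 0" then have "x*(x+1) \<noteq> 0" "x + 1 \<noteq> 0" by auto
  then show ?thesis by (simp add: divide_simps)
qed
lemma k3: "(x::real) > 0 \<Longrightarrow> (x+1)*(1/(x*(x+1))) - 1/x = 0"
proof -
  assume x: "x > 0" then have "x*(x+1) \<noteq> 0" "x + 1 \<noteq> 0" by auto
  then show ?thesis by (simp add: divide_simps)
qed
lemma k4: "(x::real) > 0 \<Longrightarrow> 1/(x*(x+1)) + ((x+1)*q - 1/x)/(x+1) = q"
proof -
  assume x: "x > 0" then have "x*(x+1) \<noteq> 0" "x + 1 \<noteq> 0" by auto
  then show ?thesis by (simp add: divide_simps)
qed

lemma delta_sum: "(\<Sum>i\<in>UNIV. (c + (if i = (j::'a::finite) then e else 0)) * x i) = c * (\<Sum>i\<in>UNIV. x i) + e * (x j::real)"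
proof -
  have "\<And>i. (c + (if i = j then e else 0)) * x i = c * x i + (if i = j then e * x j else 0)"
    by (auto simp: algebra_simps)
  then have "(\<Sum>i\<in>UNIV. (c + (if i = j then e else 0)) * x i) = (\<Sum>i\<in>UNIV. c * x i) + (\<Sum>i\<in>UNIV. (if i = j then e * x j else 0))"
    by (simp add: sum.distrib)
  then show ?thesis by (simp add: sum_distrib_left)
qed

lemma polar_inner: "inner (x - y) (x - z) = ((dist x y)^2 + (dist x z)^2 - (dist y z)^2) / 2"
  for x y z :: "'a::real_inner"
  by (simp add: dist_norm power2_norm_eq_inner inner_diff_left inner_diff_right inner_commute algebra_simps)

lemma norm_sum_sq: "(norm (\<Sum>k\<in>S. a k *\<^sub>R y k))^2 = (\<Sum>j\<in>S. \<Sum>k\<in>S. a j * a k * inner (y j) (y k))"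
  for y :: "'i \<Rightarrow> 'a::real_inner"
  by (simp add: power2_norm_eq_inner inner_sum_left inner_sum_right mult_ac sum_distrib_left inner_commute)

lemma iso_comb:
  fixes f :: "'a::real_inner \<Rightarrow> 'b::real_inner"
  assumes iso: "\<And>x y. x \<in> A \<Longrightarrow> y \<in> A \<Longrightarrow> dist (f x) (f y) = dist x y"
    and pA: "p \<in> A" and vA: "\<And>k. k \<in> S \<Longrightarrow> v k \<in> A" and a1: "sum a S = 1"
    and pv: "p = (\<Sum>k\<in>S. a k *\<^sub>R v k)"
  shows "f p = (\<Sum>k\<in>S. a k *\<^sub>R f (v k))"
proof -
  have e1: "inner (f p - f (v j)) (f p - f (v k)) = inner (p - v j) (p - v k)" if "j \<in> S" "k \<in> S" for j k
    using iso[OF pA vA[OF that(1)]] iso[OF pA vA[OF that(2)]] iso[OF vA[OF that(1)] vA[OF that(2)]]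
    by (simp add: polar_inner)
  have s1: "f p - (\<Sum>k\<in>S. a k *\<^sub>R f (v k)) = (\<Sum>k\<in>S. a k *\<^sub>R (f p - f (v k)))"
    using a1 by (simp add: scaleR_diff_right sum_subtractf flip: scaleR_sum_left)
  have s2: "p - (\<Sum>k\<in>S. a k *\<^sub>R v k) = (\<Sum>k\<in>S. a k *\<^sub>R (p - v k))"
    using a1 by (simp add: scaleR_diff_right sum_subtractf flip: scaleR_sum_left)
  have "(norm (f p - (\<Sum>k\<in>S. a k *\<^sub>R f (v k))))^2 = (\<Sum>j\<in>S. \<Sum>k\<in>S. a j * a k * inner (f p - f (v j)) (f p - f (v k)))"
    unfolding s1 norm_sum_sq ..
  also have "\<dots> = (\<Sum>j\<in>S. \<Sum>k\<in>S. a j * a k * inner (p - v j) (p - v k))"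
    by (intro sum.cong refl) (simp add: e1)
  also have "\<dots> = (norm (p - (\<Sum>k\<in>S. a k *\<^sub>R v k)))^2"
    unfolding s2 norm_sum_sq ..
  also have "\<dots> = 0" using pv by simp
  finally show ?thesis by simp
qed

lemma sq_sum: "(\<Sum>i\<in>(UNIV::'a::finite set). (a * x i - b)^2) = a^2 * (\<Sum>i\<in>UNIV. (x i)^2) - 2*a*b*(\<Sum>i\<in>UNIV. x i) + real CARD('a) * (b::real)^2"
proof -
  have "\<And>i. (a * x i - b)^2 = a^2 * (x i)^2 - (2*a*b) * x i + b^2"
    by (simp add: power2_eq_square algebra_simps)
  then have "(\<Sum>i\<in>(UNIV::'a set). (a * x i - b)^2) = (\<Sum>i\<in>UNIV. a^2 * (x i)^2) - (\<Sum>i\<in>UNIV. (2*a*b) * x i) + (\<Sum>i\<in>(UNIV::'a set). b^2)"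
    by (simp only: sum.distrib sum_subtractf)
  then show ?thesis by (simp only: sum_distrib_left[symmetric]) simp
qed

lemma k5: "(x::real) > 0 \<Longrightarrow> (x+1)^2 * ((x-1)/(x^2*(x+1)) + 2/x^2 - x^2*(1/x^2)^2) - 2*(x+1)*(1/x) + x^2*(1/x)^2 = 1"
proof -
  assume x: "x > 0" then have "x*(x+1) \<noteq> 0" "x + 1 \<noteq> 0" "x \<noteq> 0" by auto
  then show ?thesis by (simp add: divide_simps power2_eq_square)
qed

locale qp =
  fixes d :: nat and Q :: "(real^'n::finite) set"
  assumes d2: "d \<ge> 2" and card: "CARD('n) = d^2" and qpl: "qplex d Q"
begin

lemma dpos: "real d > 0" using d2 by simp
lemma dpos2: "real d + real d * real d > 0" using dpos by (simp add: add_pos_pos)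

lemma sum_const: "(\<Sum>i\<in>(UNIV::'n set). c) = (real d)^2 * c"
  using card by simp

lemma Q_simplex: "Q \<subseteq> prob_simplex" and Q_H: "Q \<subseteq> hyperH" and Q_polar: "polar d Q = Q"
  using qpl by (auto simp: qplex_def out_ball_def)

lemma sum_aa: assumes "(q::real^'n) \<in> hyperH" shows "(\<Sum>j\<in>UNIV. aa d q $ j) = 1"
proof -
  have "(\<Sum>j\<in>UNIV. aa d q $ j) = (real d + 1) * (\<Sum>j\<in>UNIV. q$j) - (real d)^2 * (1 / real d)"
    by (simp add: aa_def sum_subtractf sum_distrib_left sum_const card)
  also have "\<dots> = 1" using assms dpos by (simp add: hyperH_def power2_eq_square)
  finally show ?thesis .
qed

lemma vv_H: "vv d (j::'n) \<in> hyperH"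
proof -
  have "(\<Sum>i\<in>UNIV. vv d j $ i) = (real d)^2 * kap d + 1 / (real d + 1)"
    by (simp add: vv_def sum.distrib sum_const card)
  also have "\<dots> = 1" using k1[OF dpos] by (simp add: kap_def)
  finally show ?thesis by (simp add: hyperH_def)
qed

lemma vv_in_Q: "vv d (j::'n) \<in> Q"
proof -
  have "vv d j \<in> polar d Q"
    unfolding polar_def
  proof (intro CollectI conjI vv_H ballI)
    fix w assume w: "w \<in> Q"
    then have w1: "(\<Sum>i\<in>UNIV. w $ i) = 1" and w0: "w $ j \<ge> 0"
      using Q_simplex by (auto simp: prob_simplex_def)
    have "inner (vv d j) w = kap d * (\<Sum>i\<in>UNIV. w $ i) + w $ j / (real d + 1)"
      using delta_sum[of "kap d" j "1 / (real d + 1)" "\<lambda>i. w $ i"]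
      by (simp add: inner_vec_def vv_def)
    also have "\<dots> \<ge> kap d" using w1 w0 dpos by simp
    finally show "inner (vv d j) w \<ge> 1 / (real d * (real d + 1))" by (simp add: kap_def)
  qed
  then show ?thesis using Q_polar by simp
qed

lemma aa_vv: "aa d (vv d j) $ k = (if k = j then 1 else 0)"
proof -
  have "(real d + 1) * (kap d + 1 / (real d + 1)) - 1 / real d = 1"
    using k2[OF dpos] by (simp add: kap_def)
  moreover have "(real d + 1) * kap d - 1 / real d = 0"
    using k3[OF dpos] by (simp add: kap_def)
  ultimately show ?thesis by (simp add: aa_def vv_def)
qed

lemma decomp: assumes "(q::real^'n) \<in> hyperH" shows "q = (\<Sum>j\<in>UNIV. aa d q $ j *\<^sub>R vv d j)"
proof (rule vec_eq_iff[THEN iffD2], intro allI)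
  fix i
  have "(\<Sum>j\<in>UNIV. aa d q $ j *\<^sub>R vv d j) $ i = (\<Sum>j\<in>UNIV. (kap d + (if j = i then 1 / (real d + 1) else 0)) * aa d q $ j)"
    by (simp add: sum_component vv_def mult.commute eq_commute cong: if_cong)
  also have "\<dots> = kap d * (\<Sum>j\<in>UNIV. aa d q $ j) + aa d q $ i / (real d + 1)"
    using delta_sum[of "kap d" i "1 / (real d + 1)" "\<lambda>j. aa d q $ j"] by simp
  also have "\<dots> = kap d + aa d q $ i / (real d + 1)"
    using sum_aa[OF assms] by simp
  also have "\<dots> = q $ i" using k4[OF dpos] by (simp add: aa_def kap_def)
  finally show "q $ i = (\<Sum>j\<in>UNIV. aa d q $ j *\<^sub>R vv d j) $ i" by simp
qed

lemma meas_comb: "meas_apply d r (q::real^'n) = (\<Sum>j\<in>UNIV. aa d q $ j *\<^sub>R (\<chi> i. r i j))"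
  by (simp add: meas_apply_def aa_def vec_eq_iff)

lemma stretched_apply: assumes "(q::real^'n) \<in> hyperH" shows "stretched d r *v q = meas_apply d r q"
proof -
  have q1: "(\<Sum>j\<in>UNIV. q $ j) = 1" using assms by (simp add: hyperH_def)
  show ?thesis
    unfolding vec_eq_iff
  proof
    fix i
    have "(stretched d r *v q) $ i = (\<Sum>j\<in>UNIV. (real d + 1) * r i j * q $ j) - (\<Sum>j\<in>UNIV. (1 / real d) * (\<Sum>k\<in>UNIV. r i k) * q $ j)"
      by (simp add: stretched_def matrix_vector_mult_def algebra_simps sum_subtractf)
    also have "\<dots> = (real d + 1) * (\<Sum>j\<in>UNIV. r i j * q $ j) - (1 / real d) * (\<Sum>k\<in>UNIV. r i k) * (\<Sum>j\<in>UNIV. q $ j)"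
      by (simp add: sum_distrib_left mult.assoc)
    also have "\<dots> = (real d + 1) * (\<Sum>j\<in>UNIV. r i j * q $ j) - (1 / real d) * (\<Sum>k\<in>UNIV. r i k)"
      using q1 by simp
    also have "\<dots> = (\<Sum>j\<in>UNIV. (real d + 1) * q $ j * r i j) - (\<Sum>j\<in>UNIV. 1 / real d * r i j)"
      by (simp add: sum_distrib_left mult_ac sum_divide_distrib)
    also have "\<dots> = meas_apply d r q $ i"
      unfolding meas_apply_def by (simp add: left_diff_distrib sum_subtractf)
    finally show "(stretched d r *v q) $ i = meas_apply d r q $ i" .
  qed
qed


lemma norm_bound: assumes "q \<in> Q" shows "(\<Sum>i\<in>UNIV. (aa d q $ i)^2) \<le> 1"
proof -
  have q1: "(\<Sum>i\<in>UNIV. q $ i) = 1" using assms Q_H by (auto simp: hyperH_def)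
  have ob: "(norm (q - centre d))^2 \<le> (real d - 1) / ((real d)^2 * (real d + 1))"
    using assms qpl by (auto simp: qplex_def out_ball_def)
  define S where "S = (\<Sum>i\<in>UNIV. (q $ i)^2)"
  have "(norm (q - centre d))^2 = (\<Sum>i\<in>UNIV. (1 * q $ i - 1 / (real d)^2)^2)"
    unfolding power2_norm_eq_inner by (simp add: inner_vec_def centre_def power2_eq_square)
  also have "\<dots> = S - 2 / (real d)^2 + (real d)^2 * (1 / (real d)^2)^2"
    using q1 card sq_sum[of 1 "\<lambda>i. q $ i" "1 / (real d)^2"] by (simp add: S_def)
  finally have S1: "S \<le> (real d - 1) / ((real d)^2 * (real d + 1)) + 2 / (real d)^2 - (real d)^2 * (1 / (real d)^2)^2"
    using ob by linarith
  have "(\<Sum>i\<in>UNIV. (aa d q $ i)^2) = (\<Sum>i\<in>UNIV. ((real d + 1) * q $ i - 1 / real d)^2)"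
    by (simp add: aa_def)
  also have "\<dots> = (real d + 1)^2 * S - 2 * (real d + 1) * (1 / real d) + (real d)^2 * (1 / real d)^2"
    using q1 card sq_sum[of "real d + 1" "\<lambda>i. q $ i" "1 / real d"] by (simp add: S_def)
  also have "\<dots> \<le> (real d + 1)^2 * ((real d - 1) / ((real d)^2 * (real d + 1)) + 2 / (real d)^2 - (real d)^2 * (1 / (real d)^2)^2) - 2 * (real d + 1) * (1 / real d) + (real d)^2 * (1 / real d)^2"
    using S1 by (simp add: mult_left_mono)
  also have "\<dots> = 1" using k5[OF dpos] .
  finally show ?thesis .
qed

lemma aa_T: assumes "(x::real^'n) \<in> hyperH"
  shows "(\<Sum>j\<in>UNIV. ((real d + 1) * r i j - 1 / real d) * aa d x $ j) = aa d (meas_apply d r x) $ i"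
proof -
  have "(\<Sum>j\<in>UNIV. ((real d + 1) * r i j - 1 / real d) * aa d x $ j)
      = (\<Sum>j\<in>UNIV. (real d + 1) * (aa d x $ j * r i j) - 1 / real d * aa d x $ j)"
    by (rule sum.cong) (auto simp: algebra_simps)
  also have "\<dots> = (real d + 1) * (\<Sum>j\<in>UNIV. aa d x $ j * r i j) - 1 / real d * (\<Sum>j\<in>UNIV. aa d x $ j)"
    by (simp only: sum_subtractf sum_distrib_left)
  also have "\<dots> = (real d + 1) * (\<Sum>j\<in>UNIV. aa d x $ j * r i j) - 1 / real d"
    using sum_aa[OF assms] by simp
  also have "\<dots> = aa d (meas_apply d r x) $ i"
    by (simp add: aa_def meas_apply_def)
  finally show ?thesis .
qed

lemma T_vv: "meas_apply d r (vv d j) = (\<chi> i. r i (j::'n))"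
proof -
  have "meas_apply d r (vv d j) $ i = r i j" for i
  proof -
    have "meas_apply d r (vv d j) $ i = (\<Sum>k\<in>UNIV. aa d (vv d j) $ k * r i k)"
      by (simp add: meas_apply_def aa_def)
    also have "\<dots> = (\<Sum>k\<in>UNIV. if k = j then r i k else 0)"
      by (rule sum.cong) (auto simp: aa_vv)
    finally show ?thesis by simp
  qed
  then show ?thesis by (simp add: vec_eq_iff)
qed

lemma T_diff: assumes "(p::real^'n) \<in> hyperH" "q \<in> hyperH"
  shows "meas_apply d r p - meas_apply d r q = (\<chi> i j. (real d + 1) * r i j - 1 / real d) *v (p - q)"
proof -
  have pq: "(\<Sum>j\<in>UNIV. p $ j - q $ j) = 0" using assms by (simp add: hyperH_def sum_subtractf)
  show ?thesis unfolding vec_eq_iff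
  proof
    fix i
    have "((\<chi> i j. (real d + 1) * r i j - 1 / real d) *v (p - q)) $ i
        = (\<Sum>j\<in>UNIV. ((real d + 1) * r i j - 1 / real d) * (p $ j - q $ j))"
      by (simp add: matrix_vector_mult_def)
    also have "\<dots> = (\<Sum>j\<in>UNIV. (real d + 1) * r i j * (p $ j - q $ j) - 1 / real d * (p $ j - q $ j))"
      by (rule sum.cong) (auto simp: algebra_simps)
    also have "\<dots> = (\<Sum>j\<in>UNIV. (real d + 1) * r i j * (p $ j - q $ j)) - 1 / real d * (\<Sum>j\<in>UNIV. p $ j - q $ j)"
      by (simp only: sum_subtractf[of "\<lambda>j. (real d + 1) * r i j * (p $ j - q $ j)" "\<lambda>j. 1 / real d * (p $ j - q $ j)"] sum_distrib_left[of "1 / real d" "\<lambda>j. p $ j - q $ j", symmetric])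
    also have "\<dots> = (\<Sum>j\<in>UNIV. (real d + 1) * r i j * (p $ j - q $ j))" using pq by simp
    also have "\<dots> = (meas_apply d r p - meas_apply d r q) $ i"
      by (simp add: meas_apply_def sum_subtractf[symmetric] algebra_simps)
    finally show "(meas_apply d r p - meas_apply d r q) $ i = ((\<chi> i j. (real d + 1) * r i j - 1 / real d) *v (p - q)) $ i" by simp
  qed
qed

lemma pres_ortho:
  assumes pres: "Q_preserving d Q r"
  shows "transpose (\<chi> i j. (real d + 1) * r i j - 1 / real d) ** (\<chi> i j. (real d + 1) * r i j - 1 / real d) = (mat 1 :: real^'n^'n)"
proof -
  define A :: "real^'n^'n" where "A = (\<chi> i j. (real d + 1) * r i j - 1 / real d)"
  have TQ: "meas_apply d r ` Q = Q" using pres by (simp add: Q_preserving_def)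
  have colQ: "(\<chi> i. r i j) \<in> Q" for j
    using TQ vv_in_Q[of j] T_vv[of r j] by (metis image_eqI)
  have Acol: "A $ i $ j = aa d (\<chi> i. r i j) $ i" for i j
    by (simp add: A_def aa_def)
  have "\<forall>j. \<exists>w. w \<in> Q \<and> meas_apply d r w = vv d j"
    using TQ vv_in_Q by (metis imageE)
  then obtain w where wQ: "\<And>j. w j \<in> Q" and wT: "\<And>j. meas_apply d r (w j) = vv d j"
    by metis
  define W :: "real^'n^'n" where "W = (\<chi> i j. aa d (w j) $ i)"
  have AW: "(A ** W) $ i $ k = (if i = k then 1 else 0)" for i k
  proof -
    have "(A ** W) $ i $ k = (\<Sum>j\<in>UNIV. ((real d + 1) * r i j - 1 / real d) * aa d (w k) $ j)"
      by (simp add: matrix_matrix_mult_def A_def W_def)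
    also have "\<dots> = aa d (vv d k) $ i"
      using aa_T[of "w k" r i] wQ[of k] Q_H wT[of k] by auto
    finally show ?thesis by (simp add: aa_vv)
  qed
  have F1: "(\<Sum>i\<in>UNIV. \<Sum>j\<in>UNIV. (A $ i $ j)^2) \<le> (real d)^2"
  proof -
    have "(\<Sum>i\<in>UNIV. \<Sum>j\<in>UNIV. (A $ i $ j)^2) = (\<Sum>j\<in>UNIV. \<Sum>i\<in>UNIV. (aa d (\<chi> i. r i j) $ i)^2)"
      by (subst sum.swap) (simp add: Acol)
    also have "\<dots> \<le> (\<Sum>j\<in>(UNIV::'n set). 1)"
      by (intro sum_mono norm_bound colQ)
    finally show ?thesis by (simp add: card)
  qed
  have F2: "(\<Sum>i\<in>UNIV. \<Sum>j\<in>UNIV. (W $ j $ i)^2) \<le> (real d)^2"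
  proof -
    have "(\<Sum>i\<in>UNIV. \<Sum>j\<in>UNIV. (W $ j $ i)^2) = (\<Sum>i\<in>UNIV. \<Sum>j\<in>UNIV. (aa d (w i) $ j)^2)"
      by (simp add: W_def)
    also have "\<dots> \<le> (\<Sum>j\<in>(UNIV::'n set). 1)"
      by (intro sum_mono norm_bound wQ)
    finally show ?thesis by (simp add: card)
  qed
  have F3: "(\<Sum>i\<in>UNIV. \<Sum>j\<in>UNIV. A $ i $ j * W $ j $ i) = (real d)^2"
  proof -
    have "(\<Sum>i\<in>UNIV. \<Sum>j\<in>UNIV. A $ i $ j * W $ j $ i) = (\<Sum>i\<in>(UNIV::'n set). (A ** W) $ i $ i)"
      by (simp add: matrix_matrix_mult_def)
    also have "\<dots> = (\<Sum>i\<in>(UNIV::'n set). 1)" by (simp add: AW)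
    finally show ?thesis by (simp add: card)
  qed
  have "(\<Sum>i\<in>UNIV. \<Sum>j\<in>UNIV. (A $ i $ j - W $ j $ i)^2)
      = (\<Sum>i\<in>UNIV. \<Sum>j\<in>UNIV. (A $ i $ j)^2) + (\<Sum>i\<in>UNIV. \<Sum>j\<in>UNIV. (W $ j $ i)^2) - 2 * (\<Sum>i\<in>UNIV. \<Sum>j\<in>UNIV. A $ i $ j * W $ j $ i)"
    by (simp add: power2_diff sum.distrib sum_subtractf sum_distrib_left mult.assoc)
  also have "\<dots> \<le> 0" using F1 F2 F3 by linarith
  finally have Z: "(\<Sum>i\<in>UNIV. \<Sum>j\<in>UNIV. (A $ i $ j - W $ j $ i)^2) \<le> 0" .
  have "\<forall>i\<in>UNIV. (\<Sum>j\<in>UNIV. (A $ i $ j - W $ j $ i)^2) = 0"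
  proof -
    have "(\<Sum>i\<in>UNIV. \<Sum>j\<in>UNIV. (A $ i $ j - W $ j $ i)^2) \<ge> 0"
      by (intro sum_nonneg) simp
    then have "(\<Sum>i\<in>UNIV. \<Sum>j\<in>UNIV. (A $ i $ j - W $ j $ i)^2) = 0" using Z by linarith
    then show ?thesis by (subst (asm) sum_nonneg_eq_0_iff) (auto intro: sum_nonneg)
  qed
  then have "\<forall>i j. (A $ i $ j - W $ j $ i)^2 = 0"
    by (simp add: sum_nonneg_eq_0_iff)
  then have WA: "W = transpose A" by (simp add: vec_eq_iff transpose_def)
  have "A ** transpose A = mat 1"
    using AW unfolding WA by (simp add: vec_eq_iff mat_def)
  then have "transpose A ** A = mat 1" by (simp add: matrix_left_right_inverse)
  then show ?thesis by (simp add: A_def)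
qed

lemma pres_iso:
  assumes pres: "Q_preserving d Q r" and p: "p \<in> Q" and q: "q \<in> Q"
  shows "dist (meas_apply d r p) (meas_apply d r q) = dist p q"
proof -
  define A :: "real^'n^'n" where "A = (\<chi> i j. (real d + 1) * r i j - 1 / real d)"
  have "orthogonal_matrix A" using pres_ortho[OF pres] by (simp add: orthogonal_matrix A_def)
  then have ot: "orthogonal_transformation ((*v) A)"
    by (simp add: orthogonal_transformation_matrix matrix_vector_mul_linear matrix_of_matrix_vector_mul)
  have "dist (meas_apply d r p) (meas_apply d r q) = norm (A *v (p - q))"
    using T_diff[of p q r] p q Q_H by (simp add: dist_norm A_def subset_iff)
  also have "\<dots> = dist p q" using orthogonal_transformation_norm[OF ot] by (simp add: dist_norm)
  finally show ?thesis .
qed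


lemma Mvv: "(M *v vv d j) $ i = kap d * (\<Sum>k\<in>UNIV. M $ i $ k) + M $ i $ j / (real d + 1)"
proof -
  have "(M *v vv d j) $ i = (\<Sum>k\<in>UNIV. (kap d + (if k = j then 1 / (real d + 1) else 0)) * M $ i $ k)"
    by (simp add: matrix_vector_mult_def vv_def mult.commute)
  also have "\<dots> = kap d * (\<Sum>k\<in>UNIV. M $ i $ k) + M $ i $ j / (real d + 1)"
    using delta_sum[of "kap d" j "1 / (real d + 1)" "\<lambda>k. M $ i $ k"] by simp
  finally show ?thesis .
qed

lemma determ:
  fixes M M' :: "real^'n^'n"
  assumes eq: "\<And>j. M *v vv d j = M' *v vv d j"
  shows "M = M'"
proof -
  have rs: "(\<Sum>j\<in>UNIV. (N *v vv d j) $ i) = (\<Sum>k\<in>UNIV. N $ i $ k)" for N :: "real^'n^'n" and i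
  proof -
    have "(\<Sum>j\<in>UNIV. (N *v vv d j) $ i) = (\<Sum>j\<in>(UNIV::'n set). kap d * (\<Sum>k\<in>UNIV. N $ i $ k)) + (\<Sum>j\<in>UNIV. N $ i $ j) / (real d + 1)"
      by (simp add: Mvv sum.distrib sum_divide_distrib)
    also have "\<dots> = ((real d)^2 * kap d + 1 / (real d + 1)) * (\<Sum>k\<in>UNIV. N $ i $ k)"
      by (simp add: card algebra_simps)
    also have "\<dots> = (\<Sum>k\<in>UNIV. N $ i $ k)" using k1[OF dpos] by (simp add: kap_def)
    finally show ?thesis .
  qed
  have "M $ i $ j = M' $ i $ j" for i j
  proof -
    have s: "(\<Sum>k\<in>UNIV. M $ i $ k) = (\<Sum>k\<in>UNIV. M' $ i $ k)"
      using rs[of M i] rs[of M' i] eq by simp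
    have "(M *v vv d j) $ i = (M' *v vv d j) $ i" using eq by simp
    then have "M $ i $ j / (real d + 1) = M' $ i $ j / (real d + 1)"
      unfolding Mvv s by simp
    then show ?thesis using dpos by (simp add: divide_cancel_right)
  qed
  then show ?thesis by (simp add: vec_eq_iff)
qed

lemma converse:
  assumes fQ: "f ` Q = Q" and iso: "\<And>p q. p \<in> Q \<Longrightarrow> q \<in> Q \<Longrightarrow> dist (f p) (f q) = dist p q"
  shows "\<exists>R\<in>preservation_group d Q. \<forall>q\<in>Q. f q = R *v q"
proof -
  define r where "r = (\<lambda>i j. f (vv d j) $ i)"
  have fv: "f (vv d j) \<in> Q" for j using fQ vv_in_Q by blast
  have aff: "f q = (\<Sum>j\<in>UNIV. aa d q $ j *\<^sub>R f (vv d j))" if q: "q \<in> Q" for q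
    by (rule iso_comb[where A = Q]) (use iso q vv_in_Q Q_H sum_aa decomp in auto)
  have ma: "meas_apply d r q = f q" if q: "q \<in> Q" for q
    using aff[OF q] by (simp add: meas_comb r_def)
  have meas: "measurement r"
    using fv Q_simplex by (auto simp: measurement_def r_def prob_simplex_def)
  have "meas_apply d r ` Q = f ` Q" using ma by (rule image_cong[OF refl])
  then have "Q_preserving d Q r" using meas fQ by (simp add: Q_preserving_def)
  then have "stretched d r \<in> preservation_group d Q" by (auto simp: preservation_group_def)
  moreover have "\<forall>q\<in>Q. f q = stretched d r *v q"
    using ma stretched_apply Q_H by auto
  ultimately show ?thesis by blast
qed

lemma forward:
  assumes "R \<in> preservation_group d Q"
  shows "(\<lambda>q. R *v q) ` Q = Q" and "\<And>p q. p \<in> Q \<Longrightarrow> q \<in> Q \<Longrightarrow> dist (R *v p) (R *v q) = dist p q"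
proof -
  obtain r where R: "R = stretched d r" and pres: "Q_preserving d Q r"
    using assms by (auto simp: preservation_group_def)
  have eq: "R *v q = meas_apply d r q" if "q \<in> Q" for q
    using that Q_H stretched_apply R by auto
  have "(\<lambda>q. R *v q) ` Q = meas_apply d r ` Q" using eq by (rule image_cong[OF refl])
  then show "(\<lambda>q. R *v q) ` Q = Q" using pres by (simp add: Q_preserving_def)
  show "dist (R *v p) (R *v q) = dist p q" if "p \<in> Q" "q \<in> Q" for p q
    using pres_iso[OF pres that] eq that by simp
qed

lemma forward_bij:
  assumes "R \<in> preservation_group d Q"
  shows "bij_betw (\<lambda>q. R *v q) Q Q"
proof -
  have "inj_on (\<lambda>q. R *v q) Q"
  proof (rule inj_onI)
    fix p q assume "p \<in> Q" "q \<in> Q" "R *v p = R *v q"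
    then show "p = q" using forward(2)[OF assms, of p q] by simp
  qed
  then show ?thesis using forward(1)[OF assms] by (simp add: bij_betw_def)
qed

lemma group_part:
  "group \<lparr>carrier = preservation_group d Q, monoid.mult = (**), one = mat 1\<rparr>"
proof (rule groupI)
  fix x y assume x: "x \<in> carrier \<lparr>carrier = preservation_group d Q, monoid.mult = (**), one = mat 1\<rparr>"
    and y: "y \<in> carrier \<lparr>carrier = preservation_group d Q, monoid.mult = (**), one = mat 1\<rparr>"
  then have x: "x \<in> preservation_group d Q" and y: "y \<in> preservation_group d Q" by simp_all
  have img: "(\<lambda>q. (x ** y) *v q) ` Q = Q"
  proof -
    have "(\<lambda>q. (x ** y) *v q) ` Q = (\<lambda>q. x *v q) ` ((\<lambda>q. y *v q) ` Q)"
      by (simp add: image_image matrix_vector_mul_assoc)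
    then show ?thesis using forward(1)[OF x] forward(1)[OF y] by simp
  qed
  have iso: "dist ((x ** y) *v p) ((x ** y) *v q) = dist p q" if "p \<in> Q" "q \<in> Q" for p q
  proof -
    have "y *v p \<in> Q" "y *v q \<in> Q" using forward(1)[OF y] that by blast+
    then show ?thesis using forward(2)[OF x] forward(2)[OF y] that
      by (simp flip: matrix_vector_mul_assoc)
  qed
  obtain R where R: "R \<in> preservation_group d Q" and RQ: "\<forall>q\<in>Q. (x ** y) *v q = R *v q"
    using converse[OF img iso] by blast
  have "R = x ** y" by (rule determ) (use RQ vv_in_Q in auto)
  then show "x \<otimes>\<^bsub>\<lparr>carrier = preservation_group d Q, monoid.mult = (**), one = mat 1\<rparr>\<^esub> y
      \<in> carrier \<lparr>carrier = preservation_group d Q, monoid.mult = (**), one = mat 1\<rparr>" using R by simp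
next
  obtain R where R: "R \<in> preservation_group d Q" and RQ: "\<forall>q\<in>Q. q = R *v q"
    using converse[of "\<lambda>q. q"] by auto
  have "R = mat 1" by (rule determ) (use RQ vv_in_Q in auto)
  then show "\<one>\<^bsub>\<lparr>carrier = preservation_group d Q, monoid.mult = (**), one = mat 1\<rparr>\<^esub>
      \<in> carrier \<lparr>carrier = preservation_group d Q, monoid.mult = (**), one = mat 1\<rparr>" using R by simp
next
  fix x y z
  show "x \<otimes>\<^bsub>\<lparr>carrier = preservation_group d Q, monoid.mult = (**), one = mat 1\<rparr>\<^esub> y \<otimes>\<^bsub>\<lparr>carrier = preservation_group d Q, monoid.mult = (**), one = mat 1\<rparr>\<^esub> z =
       x \<otimes>\<^bsub>\<lparr>carrier = preservation_group d Q, monoid.mult = (**), one = mat 1\<rparr>\<^esub> (y \<otimes>\<^bsub>\<lparr>carrier = preservation_group d Q, monoid.mult = (**), one = mat 1\<rparr>\<^esub> z)"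
    by (simp add: matrix_mul_assoc)
next
  fix x
  show "\<one>\<^bsub>\<lparr>carrier = preservation_group d Q, monoid.mult = (**), one = mat 1\<rparr>\<^esub> \<otimes>\<^bsub>\<lparr>carrier = preservation_group d Q, monoid.mult = (**), one = mat 1\<rparr>\<^esub> x = x"
    by simp
next
  fix x assume "x \<in> carrier \<lparr>carrier = preservation_group d Q, monoid.mult = (**), one = mat 1\<rparr>"
  then have x: "x \<in> preservation_group d Q" by simp
  have bij: "bij_betw (\<lambda>q. x *v q) Q Q" by (rule forward_bij[OF x])
  define g where "g = inv_into Q (\<lambda>q. x *v q)"
  have gb: "bij_betw g Q Q" unfolding g_def by (rule bij_betw_inv_into[OF bij])
  have xg: "x *v g q = q" if "q \<in> Q" for q
    using bij that unfolding g_def by (simp add: bij_betw_def f_inv_into_f)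
  have gx: "g (x *v q) = q" if "q \<in> Q" for q
    using bij that unfolding g_def by (simp add: bij_betw_def inv_into_f_f)
  have gQ: "g q \<in> Q" if "q \<in> Q" for q using gb that by (auto simp: bij_betw_def)
  have iso: "dist (g p) (g q) = dist p q" if "p \<in> Q" "q \<in> Q" for p q
    using forward(2)[OF x gQ[OF that(1)] gQ[OF that(2)]] xg that by simp
  obtain R where R: "R \<in> preservation_group d Q" and RQ: "\<forall>q\<in>Q. g q = R *v q"
    using converse[of g] gb iso by (auto simp: bij_betw_def)
  have "R ** x = mat 1"
  proof (rule determ)
    fix j
    have "x *v vv d j \<in> Q" using forward(1)[OF x] vv_in_Q by blast
    then have "R *v (x *v vv d j) = g (x *v vv d j)" using RQ by simp
    also have "\<dots> = vv d j" using gx vv_in_Q by simp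
    finally show "(R ** x) *v vv d j = mat 1 *v vv d j"
      by (simp add: matrix_vector_mul_assoc[symmetric])
  qed
  then show "\<exists>y\<in>carrier \<lparr>carrier = preservation_group d Q, monoid.mult = (**), one = mat 1\<rparr>.
      y \<otimes>\<^bsub>\<lparr>carrier = preservation_group d Q, monoid.mult = (**), one = mat 1\<rparr>\<^esub> x =
      \<one>\<^bsub>\<lparr>carrier = preservation_group d Q, monoid.mult = (**), one = mat 1\<rparr>\<^esub>"
    using R by auto
qed

end

theorem mainTheorem13:
  fixes d :: nat and Q :: "(real^'n::finite) set"
  assumes "d \<ge> 2" and "CARD('n) = d^2" and "qplex d Q"
  shows "group \<lparr>carrier = preservation_group d Q, monoid.mult = (**), one = mat 1\<rparr>
     \<and> (\<forall>R\<in>preservation_group d Q.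
           bij_betw (\<lambda>q. R *v q) Q Q \<and> (\<forall>p\<in>Q. \<forall>q\<in>Q. dist (R *v p) (R *v q) = dist p q))
     \<and> (\<forall>f. bij_betw f Q Q \<and> (\<forall>p\<in>Q. \<forall>q\<in>Q. dist (f p) (f q) = dist p q)
           \<longrightarrow> (\<exists>R\<in>preservation_group d Q. \<forall>q\<in>Q. f q = R *v q))"
proof -
  interpret qp d Q using assms by (rule qp.intro)
  show ?thesis
    using group_part forward_bij forward(2) converse by (auto simp: bij_betw_def)
qed

end
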